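(* Let $q$ be a prime power, $v\ge2$, and let $u\in\mathbb{Z}$, $m\ge0$ and $\Delta\ge1$ be integers. Let $\mathcal{C}$ be a set of points of $\mathrm{PG}(v-1,q)$ with $|\mathcal{C}\cap H|\equiv u\pmod{\Delta}$ for every hyperplane $H$ and with cardinality $n=u+m\Delta\ge0$. Then $$(q-1)\cdot\sum_{h\in\mathbb{Z},\,h\le m}h(h-1)\,a_{u+h\Delta}=\tau_q(u,\Delta,m)\cdot\frac{q^{v-2}}{\Delta^2}-m(m-1),$$ where $$\tau_q(u,\Delta,m)=m(m-q)\Delta^2+\left(q^2u-2mqu+mq+2mu-qu-m\right)\Delta+(q-1)^2u^2+(q-1)u,$$ $a_i$ denotes the number of hyperplanes $H$ with $|\mathcal{C}\cap H|=i$, and $a_{u+h\Delta}:=0$ whenever $u+h\Delta<0$.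
   Context: $\mathrm{PG}(v-1,q)$ is the set of $1$-dimensional subspaces (points) of $\mathbb{F}_q^v$; hyperplanes are the $(v-1)$-dimensional subspaces of $\mathbb{F}_q^v$, and $\mathcal{C}\cap H$ is the set of points of $\mathcal{C}$ contained in $H$. *)

theory Defs
  imports "HOL-Analysis.Cartesian_Space"
begin

text \<open>The vector space F_q^v is modelled as vectors 'a^'n, where 'a is a finite
field (so q = CARD('a) is automatically a prime power) and v = CARD('n).\<close>

definition PG_points :: "('a::{field,finite}^'n::finite) set set" where
  "PG_points = {S. vec.subspace S \<and> vec.dim S = 1}"

definition PG_hyperplanes :: "('a::{field,finite}^'n::finite) set set" where
  "PG_hyperplanes = {S. vec.subspace S \<and> vec.dim S = CARD('n) - 1}"

definition pts_in :: "('a^'n) set set \<Rightarrow> ('a^'n) set \<Rightarrow> nat" where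
  "pts_in C H = card {P \<in> C. P \<subseteq> H}"

definition spec_a :: "('a::{field,finite}^'n::finite) set set \<Rightarrow> int \<Rightarrow> nat" where
  "spec_a C i = card {H \<in> PG_hyperplanes. int (pts_in C H) = i}"

definition tau :: "int \<Rightarrow> int \<Rightarrow> int \<Rightarrow> int \<Rightarrow> int" where
  "tau q u \<Delta> m = m*(m-q)*\<Delta>^2 + (q^2*u - 2*m*q*u + m*q + 2*m*u - q*u - m)*\<Delta>
      + (q-1)^2*u^2 + (q-1)*u"

end

theory Submission
  imports Defs
begin


definition dotp :: "'a::field^'n \<Rightarrow> 'a^'n \<Rightarrow> 'a" where
  "dotp x y = (\<Sum>i\<in>UNIV. x$i * y$i)"

definition perp :: "('a::field^'n) set \<Rightarrow> ('a^'n) set" where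
  "perp S = {y. \<forall>x\<in>S. dotp x y = 0}"

lemma dotp_sym: "dotp x y = dotp y x"
  unfolding dotp_def by (simp add: mult.commute)

lemma dotp_add_left: "dotp (x + z) y = dotp x y + dotp z y"
  unfolding dotp_def by (simp add: distrib_right sum.distrib)

lemma dotp_scale_left: "dotp (c *s x) y = c * dotp x y"
  unfolding dotp_def by (simp add: sum_distrib_left mult.assoc)

lemma dotp_zero_left [simp]: "dotp 0 y = 0"
  unfolding dotp_def by simp

lemma dotp_zero_right [simp]: "dotp x 0 = 0"
  unfolding dotp_def by simp

lemma dotp_diff_right: "dotp x (y - z) = dotp x y - dotp x z"
  unfolding dotp_def by (simp add: right_diff_distrib sum_subtractf)

lemma subspace_ker: "vec.subspace {x. dotp x y = 0}"
  unfolding vec.subspace_def by (simp add: dotp_add_left dotp_scale_left)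

lemma perp_span: "perp (vec.span X) = perp X"
proof
  show "perp (vec.span X) \<subseteq> perp X" unfolding perp_def using vec.span_base by blast
  show "perp X \<subseteq> perp (vec.span X)"
  proof
    fix y assume y: "y \<in> perp X"
    have "X \<subseteq> {x. dotp x y = 0}" using y unfolding perp_def by auto
    then have "vec.span X \<subseteq> {x. dotp x y = 0}" using vec.span_minimal subspace_ker by blast
    then show "y \<in> perp (vec.span X)" unfolding perp_def by auto
  qed
qed

lemma subspace_perp: "vec.subspace (perp S)"
  unfolding vec.subspace_def perp_def
  by (simp add: dotp_sym[of _ "_ + _"] dotp_sym[of _ "_ *s _"] dotp_add_left dotp_scale_left)
     (simp add: dotp_sym)

lemma perp_UNIV: "perp (UNIV::('a::field^'n) set) = {0}"
proof -
  have "y = 0" if "y \<in> perp (UNIV::('a::field^'n) set)" for y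
  proof -
    have "\<forall>i. y $ i = 0"
    proof
      fix i
      have "dotp (axis i 1) y = 0" using that unfolding perp_def by auto
      moreover have "dotp (axis i 1) y = y $ i"
      proof -
        have "dotp (axis i 1) y = (\<Sum>j\<in>UNIV. if j = i then y $ j else 0)"
          unfolding dotp_def axis_def by (rule sum.cong) auto
        then show ?thesis by simp
      qed
      ultimately show "y $ i = 0" by simp
    qed
    then show ?thesis by (simp add: vec_eq_iff)
  qed
  moreover have "(0::'a^'n) \<in> perp UNIV" unfolding perp_def dotp_def by simp
  ultimately show ?thesis by blast
qed

lemma card_span_indep:
  fixes B :: "('a::{field,finite}^'n) set"
  assumes ind: "vec.independent B"
  shows "card (vec.span B) = CARD('a) ^ card B"
proof -
  have fin: "finite B" by simp
  define \<phi> where "\<phi> c = (\<Sum>b\<in>B. c b *s b)" for c :: "'a^'n \<Rightarrow> 'a"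
  have inj: "inj_on \<phi> (PiE B (\<lambda>_. UNIV))"
  proof (rule inj_onI)
    fix c d assume c: "c \<in> PiE B (\<lambda>_. UNIV)" and d: "d \<in> PiE B (\<lambda>_. UNIV)" and eq: "\<phi> c = \<phi> d"
    have s: "(\<Sum>b\<in>B. (c b - d b) *s b) = 0"
      using eq by (simp add: \<phi>_def vec.scale_left_diff_distrib sum_subtractf)
    have "\<forall>b\<in>B. c b - d b = 0"
    proof (rule ccontr)
      assume "\<not> (\<forall>b\<in>B. c b - d b = 0)"
      then have "vec.dependent B" unfolding vec.dependent_finite[OF fin]
        using s by (intro exI[of _ "\<lambda>b. c b - d b"]) auto
      with ind show False by simp
    qed
    then show "c = d" using c d by (auto simp: PiE_iff extensional_def fun_eq_iff)
  qed
  have img: "\<phi> ` PiE B (\<lambda>_. UNIV) = vec.span B"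
    unfolding vec.span_finite[OF fin]
  proof
    show "\<phi> ` PiE B (\<lambda>_. UNIV) \<subseteq> range (\<lambda>u. \<Sum>v\<in>B. u v *s v)" unfolding \<phi>_def by auto
    show "range (\<lambda>u. \<Sum>v\<in>B. u v *s v) \<subseteq> \<phi> ` PiE B (\<lambda>_. UNIV)"
    proof
      fix x assume "x \<in> range (\<lambda>u. \<Sum>v\<in>B. u v *s v)"
      then obtain u where x: "x = (\<Sum>v\<in>B. u v *s v)" by auto
      have "restrict u B \<in> PiE B (\<lambda>_. UNIV)" by simp
      moreover have "\<phi> (restrict u B) = x" unfolding \<phi>_def x by (rule sum.cong) auto
      ultimately show "x \<in> \<phi> ` PiE B (\<lambda>_. UNIV)" by blast
    qed
  qed
  have "card (vec.span B) = card (PiE B (\<lambda>_. (UNIV::'a set)))"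
    using card_image[OF inj] img by simp
  also have "\<dots> = CARD('a) ^ card B" by (simp add: card_PiE)
  finally show ?thesis .
qed

lemma card_subspace:
  fixes S :: "('a::{field,finite}^'n) set"
  assumes "vec.subspace S"
  shows "card S = CARD('a) ^ vec.dim S"
proof -
  obtain B where B: "B \<subseteq> S" "vec.independent B" "S \<subseteq> vec.span B" "card B = vec.dim S"
    using vec.basis_exists by blast
  have "vec.span B = S" using vec.span_subspace[OF B(1) B(3) assms] .
  then show ?thesis using card_span_indep[OF B(2)] B(4) by simp
qed




lemma perp_antimono: "S \<subseteq> T \<Longrightarrow> perp T \<subseteq> perp S"
  unfolding perp_def by auto

lemma card_perp:
  fixes S :: "('a::{field,finite}^'n) set"
  assumes S: "vec.subspace S"
  shows "card (perp S) = CARD('a) ^ (CARD('n) - vec.dim S)"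
proof -
  obtain B where B: "B \<subseteq> S" "vec.independent B" "S \<subseteq> vec.span B" "card B = vec.dim S"
    using vec.basis_exists by blast
  obtain B' where B': "B \<subseteq> B'" "B' \<subseteq> UNIV" "vec.independent B'" "UNIV \<subseteq> vec.span B'"
    by (rule vec.maximal_independent_subset_extend[OF subset_UNIV B(2)])
  have spanB': "vec.span B' = UNIV" using B'(4) by blast
  have cB': "card B' = CARD('n)"
  proof -
    have "card B' = vec.dim B'" by (rule vec.dim_eq_card_independent[OF B'(3), symmetric])
    also have "\<dots> = vec.dim (vec.span B')" by simp
    also have "\<dots> = vec.dim (UNIV :: ('a^'n) set)" using spanB' by simp
    also have "\<dots> = CARD('n)" by (rule vec_dim_card)
    finally show ?thesis .
  qed
  define \<psi> where "\<psi> y = restrict (\<lambda>b. dotp b y) B'" for y :: "'a^'n"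
  have inj: "inj \<psi>"
  proof (rule injI)
    fix y z assume eq: "\<psi> y = \<psi> z"
    have "\<forall>b\<in>B'. dotp b (y - z) = 0"
    proof
      fix b assume b: "b \<in> B'"
      have "\<psi> y b = \<psi> z b" using eq by simp
      then have "dotp b y = dotp b z" using b by (simp add: \<psi>_def)
      then show "dotp b (y - z) = 0" by (simp add: dotp_diff_right)
    qed
    then have "y - z \<in> perp B'" unfolding perp_def by auto
    then have "y - z \<in> perp (vec.span B')" using perp_span by blast
    then have "y - z \<in> {0}" using perp_UNIV spanB' by metis
    then show "y = z" by simp
  qed
  have sub: "range \<psi> \<subseteq> PiE B' (\<lambda>_. UNIV)" unfolding \<psi>_def by auto
  have "card (range \<psi>) = CARD('a) ^ CARD('n)"
    using card_image[OF inj] by simp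
  also have "\<dots> = card (PiE B' (\<lambda>_. (UNIV::'a set)))" by (simp add: card_PiE cB')
  finally have rng: "range \<psi> = PiE B' (\<lambda>_. UNIV)"
    using card_subset_eq[OF _ sub] by simp
  define Z where "Z = PiE B' (\<lambda>b. if b \<in> B then {0} else (UNIV::'a set))"
  have img: "\<psi> ` perp S = Z"
  proof
    show "\<psi> ` perp S \<subseteq> Z"
    proof
      fix z assume "z \<in> \<psi> ` perp S"
      then obtain y where y: "y \<in> perp S" "z = \<psi> y" by blast
      show "z \<in> Z" unfolding Z_def y(2) \<psi>_def using y(1) B(1) unfolding perp_def by auto
    qed
    show "Z \<subseteq> \<psi> ` perp S"
    proof
      fix z assume z: "z \<in> Z"
      then have "z \<in> range \<psi>" unfolding rng Z_def by (auto simp: PiE_iff)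
      then obtain y where y: "z = \<psi> y" by blast
      have "\<forall>b\<in>B. dotp b y = 0"
      proof
        fix b assume b: "b \<in> B"
        then have "z b \<in> {0}" using z B'(1) unfolding Z_def PiE_iff by (metis subsetD)
        then have "z b = 0" by simp
        then show "dotp b y = 0" using b B'(1) unfolding y \<psi>_def by auto
      qed
      then have "y \<in> perp B" unfolding perp_def by auto
      then have "y \<in> perp (vec.span B)" using perp_span by blast
      then have "y \<in> perp S" using perp_antimono[OF B(3)] by blast
      then show "z \<in> \<psi> ` perp S" using y by blast
    qed
  qed
  have "card (perp S) = card Z"
    using card_image[OF inj_on_subset[OF inj], of "perp S"] img by simp
  also have "\<dots> = (\<Prod>b\<in>B'. card (if b \<in> B then {0} else (UNIV::'a set)))"
    unfolding Z_def by (rule card_PiE) simp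
  also have "\<dots> = (\<Prod>b\<in>B'. if b \<in> B then 1 else CARD('a))"
    by (rule prod.cong) auto
  also have "\<dots> = CARD('a) ^ card (B' - B)"
    by (simp add: prod.If_cases Diff_eq)
  also have "card (B' - B) = CARD('n) - vec.dim S"
    using card_Diff_subset[OF _ B'(1)] cB' B(4) by simp
  finally show ?thesis .
qed

lemma card_field_ge2: "CARD('a::{field,finite}) \<ge> 2"
proof -
  have "card {0::'a, 1} \<le> CARD('a)" by (rule card_mono) simp_all
  then show ?thesis by simp
qed

lemma dim_from_card:
  fixes S :: "('a::{field,finite}^'n) set"
  assumes "vec.subspace S" "card S = CARD('a) ^ k"
  shows "vec.dim S = k"
proof -
  have "CARD('a) ^ vec.dim S = CARD('a) ^ k" using card_subspace[OF assms(1)] assms(2) by simp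
  then show ?thesis using card_field_ge2[where 'a='a] power_inject_exp[of "CARD('a)"] by simp
qed

lemma dim_singleton:
  fixes y :: "'a::field^'n"
  assumes "y \<noteq> 0"
  shows "vec.dim (vec.span {y}) = 1"
proof -
  have "vec.independent {y}" using assms by (simp add: vec.independent_insert)
  then show ?thesis using vec.dim_eq_card_independent by simp
qed

definition kerv :: "'a::field^'n \<Rightarrow> ('a^'n) set" where
  "kerv y = {x. dotp x y = 0}"

lemma kerv_perp: "kerv y = perp {y}"
  unfolding kerv_def perp_def by (simp add: dotp_sym[of y])

lemma kerv_hyp:
  fixes y :: "'a::{field,finite}^'n"
  assumes "y \<noteq> 0"
  shows "kerv y \<in> PG_hyperplanes"
proof -
  have "kerv y = perp (vec.span {y})" by (simp add: kerv_perp perp_span)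
  moreover have "card (perp (vec.span {y})) = CARD('a) ^ (CARD('n) - vec.dim (vec.span {y}))"
    by (rule card_perp[OF vec.subspace_span])
  ultimately have "card (kerv y) = CARD('a) ^ (CARD('n) - 1)"
    using dim_singleton[OF assms] by simp
  then have "vec.dim (kerv y) = CARD('n) - 1"
    using dim_from_card subspace_ker unfolding kerv_def by blast
  then show ?thesis unfolding PG_hyperplanes_def using subspace_ker unfolding kerv_def by auto
qed

lemma count_hyp:
  fixes W :: "('a::{field,finite}^'n) set"
  assumes W: "vec.subspace W"
  shows "(CARD('a) - 1) * card {H \<in> PG_hyperplanes. W \<subseteq> H} = CARD('a) ^ (CARD('n) - vec.dim W) - 1"
proof -
  let ?q = "CARD('a)"
  define F where "F = perp W - {0}"
  have "0 \<in> perp W" using vec.subspace_0[OF subspace_perp] .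
  then have cF: "card F = ?q ^ (CARD('n) - vec.dim W) - 1"
    unfolding F_def using card_perp[OF W] by (simp add: card_Diff_singleton)
  have fib: "{y \<in> F. kerv y = H} = perp H - {0}" if H: "H \<in> PG_hyperplanes" "W \<subseteq> H" for H
  proof
    show "{y \<in> F. kerv y = H} \<subseteq> perp H - {0}"
      unfolding F_def kerv_def perp_def by auto
    show "perp H - {0} \<subseteq> {y \<in> F. kerv y = H}"
    proof
      fix y assume y: "y \<in> perp H - {0}"
      have sH: "vec.subspace H" "vec.dim H = CARD('n) - 1" using H unfolding PG_hyperplanes_def by auto
      have kh: "kerv y \<in> PG_hyperplanes" using kerv_hyp y by blast
      have "H \<subseteq> kerv y" using y unfolding perp_def kerv_def by auto
      then have "H = kerv y"
        using vec.subspace_dim_equal[OF sH(1), of "kerv y"] sH kh unfolding PG_hyperplanes_def by auto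
      moreover have "y \<in> F" using y perp_antimono[OF H(2)] unfolding F_def by auto
      ultimately show "y \<in> {y \<in> F. kerv y = H}" by auto
    qed
  qed
  have cfib: "card {y \<in> F. kerv y = H} = ?q - 1" if H: "H \<in> PG_hyperplanes" "W \<subseteq> H" for H
  proof -
    have sH: "vec.subspace H" "vec.dim H = CARD('n) - 1" using H unfolding PG_hyperplanes_def by auto
    have "0 \<in> perp H" using vec.subspace_0[OF subspace_perp] .
    moreover have "CARD('n) - (CARD('n) - 1) = 1" using finite_UNIV_card_ge_0[where 'a='n] by simp
    ultimately show ?thesis using fib[OF H] card_perp[OF sH(1)] sH(2) by (simp add: card_Diff_singleton)
  qed
  have imgF: "kerv ` F = {H \<in> PG_hyperplanes. W \<subseteq> H}"
  proof
    show "kerv ` F \<subseteq> {H \<in> PG_hyperplanes. W \<subseteq> H}"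
    proof
      fix H assume "H \<in> kerv ` F"
      then obtain y where y: "y \<in> F" "H = kerv y" by blast
      have "H \<in> PG_hyperplanes" using kerv_hyp y unfolding F_def by blast
      moreover have "W \<subseteq> H" using y unfolding F_def perp_def kerv_def by blast
      ultimately show "H \<in> {H \<in> PG_hyperplanes. W \<subseteq> H}" by blast
    qed
    show "{H \<in> PG_hyperplanes. W \<subseteq> H} \<subseteq> kerv ` F"
    proof
      fix H assume H: "H \<in> {H \<in> PG_hyperplanes. W \<subseteq> H}"
      have "card {y \<in> F. kerv y = H} \<noteq> 0" using cfib H card_field_ge2[where 'a='a] by auto
      then obtain y where "y \<in> F" "kerv y = H" by (metis (mono_tags, lifting) Collect_empty_eq card.empty)
      then show "H \<in> kerv ` F" by blast
    qed
  qed
  have "card F = (\<Sum>H\<in>kerv ` F. card {y \<in> F. kerv y = H})"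
    using sum.image_gen[of F "\<lambda>_. (1::nat)" kerv] by simp
  also have "\<dots> = (\<Sum>H\<in>kerv ` F. ?q - 1)"
    by (rule sum.cong) (use cfib imgF in auto)
  also have "\<dots> = (?q - 1) * card {H \<in> PG_hyperplanes. W \<subseteq> H}" using imgF by simp
  finally show ?thesis using cF by simp
qed




lemma point_span:
  fixes P :: "('a::{field,finite}^'n) set"
  assumes "P \<in> PG_points"
  obtains p where "p \<noteq> 0" "P = vec.span {p}"
proof -
  have sP: "vec.subspace P" "vec.dim P = 1" using assms unfolding PG_points_def by auto
  obtain B where B: "B \<subseteq> P" "vec.independent B" "P \<subseteq> vec.span B" "card B = vec.dim P"
    using vec.basis_exists by blast
  have "card B = 1" using B(4) sP(2) by simp
  then obtain p where p: "B = {p}" by (rule card_1_singletonE)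
  have "p \<noteq> 0"
  proof
    assume "p = 0"
    then have "0 \<in> B" using p by simp
    then show False using B(2) vec.dependent_zero by blast
  qed
  moreover have "P = vec.span {p}" using vec.span_subspace[OF B(1) B(3) sP(1)] p by simp
  ultimately show ?thesis using that by blast
qed

lemma span_union_spans: "vec.span (vec.span A \<union> vec.span B) = vec.span (A \<union> B)"
proof
  show "vec.span (vec.span A \<union> vec.span B) \<subseteq> vec.span (A \<union> B)"
    by (rule vec.span_minimal) (auto intro: vec.span_mono[THEN subsetD])
  show "vec.span (A \<union> B) \<subseteq> vec.span (vec.span A \<union> vec.span B)"
    by (rule vec.span_mono) (use vec.span_superset in blast)
qed

lemma pair_dim:
  fixes P Q :: "('a::{field,finite}^'n) set"
  assumes P: "P \<in> PG_points" and Q: "Q \<in> PG_points" and ne: "P \<noteq> Q"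
  shows "vec.dim (vec.span (P \<union> Q)) = 2"
proof -
  obtain p where p: "p \<noteq> 0" "P = vec.span {p}" using point_span[OF P] by blast
  obtain r where r: "r \<noteq> 0" "Q = vec.span {r}" using point_span[OF Q] by blast
  have sp: "vec.span (P \<union> Q) = vec.span {p, r}"
    using span_union_spans[of "{p}" "{r}"] p r by (simp add: insert_commute)
  have "p \<notin> vec.span {r}"
  proof
    assume "p \<in> vec.span {r}"
    then have "P \<subseteq> Q" using p r vec.span_minimal[of "{p}" "vec.span {r}"] by auto
    moreover have "vec.subspace P" "vec.subspace Q" "vec.dim P = 1" "vec.dim Q = 1"
      using P Q unfolding PG_points_def by auto
    ultimately have "P = Q" using vec.subspace_dim_equal[of P Q] by simp
    then show False using ne by simp
  qed
  moreover have "p \<noteq> r" using ne p r by auto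
  ultimately have ind: "vec.independent {p, r}" using r by (simp add: vec.independent_insert)
  have "vec.dim {p, r} = card {p, r}" using vec.dim_eq_card_independent[OF ind] .
  then show ?thesis using sp \<open>p \<noteq> r\<close> by simp
qed

lemma card_offdiag:
  assumes "finite A"
  shows "card {(a, b) \<in> A \<times> A. a \<noteq> b} = card A * (card A - 1)"
proof -
  have eq: "{(a, b) \<in> A \<times> A. a \<noteq> b} = A \<times> A - (\<lambda>a. (a, a)) ` A" by auto
  have "card ((\<lambda>a. (a, a)) ` A) = card A" by (rule card_image) (auto intro: inj_onI)
  moreover have "(\<lambda>a. (a, a)) ` A \<subseteq> A \<times> A" by auto
  ultimately have "card {(a, b) \<in> A \<times> A. a \<noteq> b} = card A * card A - card A"
    unfolding eq using assms by (simp add: card_Diff_subset card_cartesian_product)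
  then show ?thesis by (simp add: diff_mult_distrib2)
qed




lemma finite_hyp: "finite (PG_hyperplanes :: ('a::{field,finite}^'n::finite) set set)"
  by simp

lemma E0:
  shows "(real CARD('a) - 1) * real (card (PG_hyperplanes :: ('a::{field,finite}^'n::finite) set set))
         = real CARD('a) ^ CARD('n) - 1"
proof -
  have "{H \<in> (PG_hyperplanes :: ('a^'n) set set). {0} \<subseteq> H} = PG_hyperplanes"
    unfolding PG_hyperplanes_def using vec.subspace_0 by auto
  moreover have "vec.dim {0::'a^'n} = 0" by simp
  ultimately have "(CARD('a) - 1) * card (PG_hyperplanes :: ('a^'n) set set) = CARD('a) ^ CARD('n) - 1"
    using count_hyp[OF vec.subspace_single_0, where 'a='a and 'n='n] by simp
  then have "real ((CARD('a) - 1) * card (PG_hyperplanes :: ('a^'n) set set)) = real (CARD('a) ^ CARD('n) - 1)"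
    by simp
  moreover have "1 \<le> CARD('a)" "1 \<le> CARD('a) ^ CARD('n)" using card_field_ge2[where 'a='a] by auto
  ultimately show ?thesis by (simp add: of_nat_diff)
qed

lemma E1:
  fixes C :: "('a::{field,finite}^'n::finite) set set"
  assumes "C \<subseteq> PG_points"
  shows "(real CARD('a) - 1) * (\<Sum>H\<in>PG_hyperplanes. real (pts_in C H))
         = real (card C) * (real CARD('a) ^ (CARD('n) - 1) - 1)"
proof -
  let ?Hs = "PG_hyperplanes :: ('a^'n) set set"
  have "(\<Sum>H\<in>?Hs. pts_in C H) = (\<Sum>H\<in>?Hs. \<Sum>P\<in>C. if P \<subseteq> H then 1 else 0)"
    unfolding pts_in_def by (rule sum.cong) (simp_all add: sum.inter_filter[symmetric])
  also have "\<dots> = (\<Sum>P\<in>C. \<Sum>H\<in>?Hs. if P \<subseteq> H then 1 else 0)" by (rule sum.swap)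
  also have "\<dots> = (\<Sum>P\<in>C. card {H \<in> ?Hs. P \<subseteq> H})"
    by (rule sum.cong) (simp_all add: sum.inter_filter[symmetric])
  finally have s: "(\<Sum>H\<in>?Hs. pts_in C H) = (\<Sum>P\<in>C. card {H \<in> ?Hs. P \<subseteq> H})" .
  have each: "(real CARD('a) - 1) * real (card {H \<in> ?Hs. P \<subseteq> H}) = real CARD('a) ^ (CARD('n) - 1) - 1"
    if "P \<in> C" for P
  proof -
    have sP: "vec.subspace P" "vec.dim P = 1" using that assms unfolding PG_points_def by auto
    have "(CARD('a) - 1) * card {H \<in> ?Hs. P \<subseteq> H} = CARD('a) ^ (CARD('n) - 1) - 1"
      using count_hyp[OF sP(1)] sP(2) by simp
    then have "real ((CARD('a) - 1) * card {H \<in> ?Hs. P \<subseteq> H}) = real (CARD('a) ^ (CARD('n) - 1) - 1)"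
      by simp
    moreover have "1 \<le> CARD('a)" "1 \<le> CARD('a) ^ (CARD('n) - 1)" using card_field_ge2[where 'a='a] by auto
    ultimately show ?thesis by (simp add: of_nat_diff)
  qed
  have "(real CARD('a) - 1) * (\<Sum>H\<in>?Hs. real (pts_in C H))
        = (real CARD('a) - 1) * real (\<Sum>H\<in>?Hs. pts_in C H)" by simp
  also have "\<dots> = (\<Sum>P\<in>C. (real CARD('a) - 1) * real (card {H \<in> ?Hs. P \<subseteq> H}))"
    unfolding s by (simp add: sum_distrib_left)
  also have "\<dots> = (\<Sum>P\<in>C. real CARD('a) ^ (CARD('n) - 1) - 1)"
    by (rule sum.cong) (simp_all add: each)
  also have "\<dots> = real (card C) * (real CARD('a) ^ (CARD('n) - 1) - 1)" by simp
  finally show ?thesis .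
qed

lemma E2:
  fixes C :: "('a::{field,finite}^'n::finite) set set"
  assumes "C \<subseteq> PG_points"
  shows "(real CARD('a) - 1) * (\<Sum>H\<in>PG_hyperplanes. real (pts_in C H) * (real (pts_in C H) - 1))
         = real (card C) * (real (card C) - 1) * (real CARD('a) ^ (CARD('n) - 2) - 1)"
proof -
  let ?Hs = "PG_hyperplanes :: ('a^'n) set set"
  let ?Off = "{(P, Q) \<in> C \<times> C. P \<noteq> Q}"
  have rx: "real k * (real k - 1) = real (k * (k - 1))" for k :: nat
    by (cases k) (auto simp: algebra_simps)
  have xH: "pts_in C H * (pts_in C H - 1) = (\<Sum>pq\<in>?Off. if vec.span (fst pq \<union> snd pq) \<subseteq> H then 1 else 0)"
    if H: "H \<in> ?Hs" for H
  proof -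
    have sH: "vec.subspace H" using H unfolding PG_hyperplanes_def by auto
    let ?A = "{P \<in> C. P \<subseteq> H}"
    have "pts_in C H * (pts_in C H - 1) = card {(a, b) \<in> ?A \<times> ?A. a \<noteq> b}"
      unfolding pts_in_def by (rule card_offdiag[symmetric]) simp
    also have "{(a, b) \<in> ?A \<times> ?A. a \<noteq> b} = {pq \<in> ?Off. vec.span (fst pq \<union> snd pq) \<subseteq> H}"
    proof -
      have "vec.span (P \<union> Q) \<subseteq> H \<longleftrightarrow> P \<subseteq> H \<and> Q \<subseteq> H" for P Q
      proof
        assume "vec.span (P \<union> Q) \<subseteq> H"
        then show "P \<subseteq> H \<and> Q \<subseteq> H" using vec.span_superset[of "P \<union> Q"] by blast
      next
        assume "P \<subseteq> H \<and> Q \<subseteq> H"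
        then show "vec.span (P \<union> Q) \<subseteq> H" using vec.span_minimal[OF _ sH] by blast
      qed
      then show ?thesis by auto
    qed
    also have "card {pq \<in> ?Off. vec.span (fst pq \<union> snd pq) \<subseteq> H}
       = (\<Sum>pq\<in>?Off. if vec.span (fst pq \<union> snd pq) \<subseteq> H then 1 else 0)"
      by (simp add: sum.inter_filter[symmetric])
    finally show ?thesis .
  qed
  have "(\<Sum>H\<in>?Hs. pts_in C H * (pts_in C H - 1))
      = (\<Sum>H\<in>?Hs. \<Sum>pq\<in>?Off. if vec.span (fst pq \<union> snd pq) \<subseteq> H then 1 else 0)"
    by (rule sum.cong[OF refl xH])
  also have "\<dots> = (\<Sum>pq\<in>?Off. \<Sum>H\<in>?Hs. if vec.span (fst pq \<union> snd pq) \<subseteq> H then 1 else 0)"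
    by (rule sum.swap)
  also have "\<dots> = (\<Sum>pq\<in>?Off. card {H \<in> ?Hs. vec.span (fst pq \<union> snd pq) \<subseteq> H})"
    by (rule sum.cong) (simp_all add: sum.inter_filter[symmetric])
  finally have s: "(\<Sum>H\<in>?Hs. pts_in C H * (pts_in C H - 1))
      = (\<Sum>pq\<in>?Off. card {H \<in> ?Hs. vec.span (fst pq \<union> snd pq) \<subseteq> H})" .
  have each: "(real CARD('a) - 1) * real (card {H \<in> ?Hs. vec.span (fst pq \<union> snd pq) \<subseteq> H})
       = real CARD('a) ^ (CARD('n) - 2) - 1" if hpq: "pq \<in> ?Off" for pq
  proof -
    obtain P Q where pq: "pq = (P, Q)" "P \<in> C" "Q \<in> C" "P \<noteq> Q" using hpq by auto
    have d: "vec.dim (vec.span (P \<union> Q)) = 2" using pair_dim pq assms by blast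
    have "(CARD('a) - 1) * card {H \<in> ?Hs. vec.span (P \<union> Q) \<subseteq> H} = CARD('a) ^ (CARD('n) - 2) - 1"
      using count_hyp[OF vec.subspace_span[of "P \<union> Q"]] d by simp
    then have "real ((CARD('a) - 1) * card {H \<in> ?Hs. vec.span (P \<union> Q) \<subseteq> H}) = real (CARD('a) ^ (CARD('n) - 2) - 1)"
      by simp
    moreover have "1 \<le> CARD('a)" "1 \<le> CARD('a) ^ (CARD('n) - 2)" using card_field_ge2[where 'a='a] by auto
    ultimately show ?thesis using pq by (simp add: of_nat_diff)
  qed
  have "(real CARD('a) - 1) * (\<Sum>H\<in>?Hs. real (pts_in C H) * (real (pts_in C H) - 1))
        = (real CARD('a) - 1) * real (\<Sum>H\<in>?Hs. pts_in C H * (pts_in C H - 1))" by (simp add: rx)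
  also have "\<dots> = (\<Sum>pq\<in>?Off. (real CARD('a) - 1) * real (card {H \<in> ?Hs. vec.span (fst pq \<union> snd pq) \<subseteq> H}))"
    unfolding s by (simp add: sum_distrib_left)
  also have "\<dots> = (\<Sum>pq\<in>?Off. real CARD('a) ^ (CARD('n) - 2) - 1)"
    by (rule sum.cong) (simp_all add: each)
  also have "\<dots> = real (card ?Off) * (real CARD('a) ^ (CARD('n) - 2) - 1)" by simp
  also have "card ?Off = card C * (card C - 1)" by (rule card_offdiag) simp
  finally show ?thesis by (simp add: rx)
qed



lemma poly_id:
  fixes q Q u m D :: real
  shows "(u+m*D)*((u+m*D)-1)*(Q-1) + (1-2*u-D)*((u+m*D)*(q*Q-1)) + u*(u+D)*(q^2*Q-1)
     = (m*(m-q)*D^2 + (q^2*u - 2*m*q*u + m*q + 2*m*u - q*u - m)*D + (q-1)^2*u^2 + (q-1)*u)*Q - m*(m-1)*D^2"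
  by (simp add: algebra_simps power2_eq_square)
lemma tau_real:
  "real_of_int (tau (int c) u d m) = (real_of_int m*(real_of_int m-real c)*(real_of_int d)^2 + ((real c)^2*real_of_int u - 2*real_of_int m*real c*real_of_int u + real_of_int m*real c + 2*real_of_int m*real_of_int u - real c*real_of_int u - real_of_int m)*real_of_int d + (real c-1)^2*(real_of_int u)^2 + (real c-1)*real_of_int u)"
  unfolding tau_def by simp



theorem lemma5p6:
  fixes C :: "('a::{field,finite}^'n::finite) set set"
    and u m \<Delta> :: int
  assumes "CARD('n) \<ge> 2"
    and "m \<ge> 0" and "\<Delta> \<ge> 1"
    and "C \<subseteq> PG_points"
    and "\<forall>H \<in> PG_hyperplanes. int (pts_in C H) mod \<Delta> = u mod \<Delta>"
    and "int (card C) = u + m*\<Delta>"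
  shows "(real CARD('a) - 1) * (\<Sum>h \<in> {h. h \<le> m \<and> 0 \<le> u + h*\<Delta>}. real_of_int (h*(h-1)) * real (spec_a C (u + h*\<Delta>)))
       = real_of_int (tau (int CARD('a)) u \<Delta> m) * real CARD('a) ^ (CARD('n) - 2) / (real_of_int \<Delta>)^2
         - real_of_int (m*(m-1))"
proof -
  let ?Hs = "PG_hyperplanes :: ('a^'n) set set"
  let ?I = "{h. h \<le> m \<and> 0 \<le> u + h*\<Delta>}"
  define x where "x H = pts_in C H" for H
  define hh where "hh H = (int (x H) - u) div \<Delta>" for H
  define f where "f h = real_of_int (h*(h-1))" for h
  have xh: "int (x H) = u + hh H * \<Delta>" if "H \<in> ?Hs" for H
  proof -
    have "\<Delta> dvd int (x H) - u" using assms(5) that unfolding x_def by (simp add: mod_eq_dvd_iff)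
    then show ?thesis unfolding hh_def by auto
  qed
  have xle: "x H \<le> card C" for H
    unfolding x_def pts_in_def by (rule card_mono) auto
  have hhI: "hh H \<in> ?I" if "H \<in> ?Hs" for H
  proof -
    have "u + hh H * \<Delta> \<le> u + m * \<Delta>" using xh[OF that] xle[of H] assms(6) by linarith
    then have "hh H * \<Delta> \<le> m * \<Delta>" by simp
    then have "hh H \<le> m" using assms(3) by simp
    moreover have "0 \<le> u + hh H * \<Delta>" using xh[OF that] by linarith
    ultimately show ?thesis by simp
  qed
  have finI: "finite ?I"
  proof (rule finite_subset)
    show "?I \<subseteq> {-\<bar>u\<bar>..m}"
    proof
      fix h assume h: "h \<in> ?I"
      have "-\<bar>u\<bar> \<le> h"
      proof (rule ccontr)
        assume "\<not> - \<bar>u\<bar> \<le> h"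
        then have "h < 0" "h < -\<bar>u\<bar>" by auto
        then have "h * \<Delta> \<le> h" using assms(3) by (simp add: mult_le_cancel_left1)
        then show False using h \<open>h < -\<bar>u\<bar>\<close> by auto
      qed
      then show "h \<in> {-\<bar>u\<bar>..m}" using h by auto
    qed
  qed simp
  have spec: "spec_a C (u + h*\<Delta>) = card {H \<in> ?Hs. hh H = h}" for h
  proof -
    have "{H \<in> ?Hs. int (pts_in C H) = u + h*\<Delta>} = {H \<in> ?Hs. hh H = h}"
      using xh assms(3) unfolding x_def by auto
    then show ?thesis unfolding spec_a_def by simp
  qed
  have regroup: "(\<Sum>h\<in>?I. f h * real (spec_a C (u + h*\<Delta>))) = (\<Sum>H\<in>?Hs. f (hh H))"
  proof -
    have "(\<Sum>H\<in>?Hs. f (hh H)) = (\<Sum>h\<in>hh ` ?Hs. \<Sum>H\<in>{H \<in> ?Hs. hh H = h}. f (hh H))"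
      by (rule sum.image_gen) simp
    also have "\<dots> = (\<Sum>h\<in>hh ` ?Hs. f h * real (card {H \<in> ?Hs. hh H = h}))"
      by (rule sum.cong) auto
    also have "\<dots> = (\<Sum>h\<in>?I. f h * real (card {H \<in> ?Hs. hh H = h}))"
    proof (rule sum.mono_neutral_left[OF finI])
      show "hh ` ?Hs \<subseteq> ?I" using hhI by blast
      show "\<forall>h\<in>?I - hh ` ?Hs. f h * real (card {H \<in> ?Hs. hh H = h}) = 0"
      proof
        fix h assume "h \<in> ?I - hh ` ?Hs"
        then have "{H \<in> ?Hs. hh H = h} = {}" by auto
        then show "f h * real (card {H \<in> ?Hs. hh H = h}) = 0" by simp
      qed
    qed
    finally show ?thesis using spec by simp
  qed
  define D where "D = real_of_int \<Delta>"
  have Dpos: "D > 0" using assms(3) unfolding D_def by simp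
  have perH: "f (hh H) * D^2 = real (x H) * (real (x H) - 1) + (1 - 2*real_of_int u - D) * real (x H)
        + real_of_int u * (real_of_int u + D)" if "H \<in> ?Hs" for H
  proof -
    have e: "real (x H) = real_of_int u + real_of_int (hh H) * D"
      using xh[OF that] unfolding D_def by (metis of_int_add of_int_mult of_int_of_nat_eq)
    show ?thesis unfolding f_def e by (simp add: algebra_simps power2_eq_square)
  qed
  let ?S0 = "real (card ?Hs)"
  let ?S1 = "\<Sum>H\<in>?Hs. real (x H)"
  let ?S2 = "\<Sum>H\<in>?Hs. real (x H) * (real (x H) - 1)"
  have sumD: "(\<Sum>H\<in>?Hs. f (hh H)) * D^2 = ?S2 + (1 - 2*real_of_int u - D) * ?S1 + real_of_int u * (real_of_int u + D) * ?S0"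
  proof -
    have "(\<Sum>H\<in>?Hs. f (hh H)) * D^2 = (\<Sum>H\<in>?Hs. f (hh H) * D^2)" by (simp add: sum_distrib_right)
    also have "\<dots> = (\<Sum>H\<in>?Hs. real (x H) * (real (x H) - 1) + (1 - 2*real_of_int u - D) * real (x H)
        + real_of_int u * (real_of_int u + D))" by (rule sum.cong) (simp_all add: perH)
    also have "\<dots> = ?S2 + (1 - 2*real_of_int u - D) * ?S1 + real_of_int u * (real_of_int u + D) * ?S0"
      by (simp add: sum.distrib sum_distrib_left)
    finally show ?thesis .
  qed
  define q where "q = real CARD('a)"
  define Q where "Q = real CARD('a) ^ (CARD('n) - 2)"
  define n where "n = real (card C)"
  define k where "k = CARD('n) - 2"
  have kv: "CARD('n) = k + 2" "CARD('n) - 1 = k + 1" "CARD('n) - 2 = k" using assms(1) unfolding k_def by auto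
  have qv: "real CARD('a) ^ CARD('n) = q^2 * Q" unfolding q_def Q_def kv(3) unfolding kv(1)
    by (simp add: power_add mult.commute power2_eq_square)
  have qv1: "real CARD('a) ^ (CARD('n) - 1) = q * Q" unfolding q_def Q_def kv(3) unfolding kv(2)
    by (simp add: power_add mult.commute)
  have e0: "(q - 1) * ?S0 = q^2 * Q - 1" using E0[where 'a='a and 'n='n] qv unfolding q_def by simp
  have e1: "(q - 1) * ?S1 = n * (q * Q - 1)" using E1[OF assms(4)] qv1 unfolding q_def n_def x_def by simp
  have e2: "(q - 1) * ?S2 = n * (n - 1) * (Q - 1)" using E2[OF assms(4)] unfolding q_def n_def x_def Q_def by simp
  have nval: "n = real_of_int u + real_of_int m * D" unfolding n_def D_def using assms(6)
    by (metis of_int_add of_int_mult of_int_of_nat_eq)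
  have g: "(q - 1) * T * D^2 = (q - 1) * S2 + a * ((q - 1) * S1) + b * ((q - 1) * S0)"
    if "T * D^2 = S2 + a * S1 + b * S0" for T S0 S1 S2 a b :: real
  proof -
    have "(q - 1) * T * D^2 = (q - 1) * (T * D^2)" by (simp only: mult.assoc)
    also have "\<dots> = (q - 1) * (S2 + a * S1 + b * S0)" by (simp only: that)
    also have "\<dots> = (q - 1) * S2 + a * ((q - 1) * S1) + b * ((q - 1) * S0)" by (simp add: algebra_simps)
    finally show ?thesis .
  qed
  have key: "(q - 1) * (\<Sum>H\<in>?Hs. f (hh H)) * D^2
      = real_of_int (tau (int CARD('a)) u \<Delta> m) * Q - real_of_int (m*(m-1)) * D^2"
  proof -
    have "(q - 1) * (\<Sum>H\<in>?Hs. f (hh H)) * D^2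
        = (q - 1) * ?S2 + (1 - 2*real_of_int u - D) * ((q - 1) * ?S1) + real_of_int u * (real_of_int u + D) * ((q - 1) * ?S0)"
      by (rule g[OF sumD])
    also have "\<dots> = n * (n - 1) * (Q - 1) + (1 - 2*real_of_int u - D) * (n * (q * Q - 1))
        + real_of_int u * (real_of_int u + D) * (q^2 * Q - 1)"
      by (simp only: e0 e1 e2)
    also have "\<dots> = real_of_int (tau (int CARD('a)) u \<Delta> m) * Q - real_of_int (m*(m-1)) * D^2"
    proof -
      have t: "real_of_int (tau (int CARD('a)) u \<Delta> m) = (real_of_int m*(real_of_int m-q)*D^2 + (q^2*real_of_int u - 2*real_of_int m*q*real_of_int u + real_of_int m*q + 2*real_of_int m*real_of_int u - q*real_of_int u - real_of_int m)*D + (q-1)^2*(real_of_int u)^2 + (q-1)*real_of_int u)"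
        unfolding q_def D_def by (rule tau_real)
      show ?thesis unfolding t nval of_int_mult of_int_diff of_int_1 by (rule poly_id)
    qed
    finally show ?thesis .
  qed
  have "(real CARD('a) - 1) * (\<Sum>h\<in>?I. real_of_int (h*(h-1)) * real (spec_a C (u + h*\<Delta>)))
      = (q - 1) * (\<Sum>H\<in>?Hs. f (hh H))" using regroup unfolding f_def q_def by simp
  also have "\<dots> = (real_of_int (tau (int CARD('a)) u \<Delta> m) * Q - real_of_int (m*(m-1)) * D^2) / D^2"
    using key Dpos by (simp add: field_simps)
  also have "\<dots> = real_of_int (tau (int CARD('a)) u \<Delta> m) * real CARD('a) ^ (CARD('n) - 2) / (real_of_int \<Delta>)^2
         - real_of_int (m*(m-1))"
    unfolding Q_def D_def using Dpos unfolding D_def by (simp add: field_simps)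
  finally show ?thesis .
qed


end
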